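(* Let $\alpha>0$ and $s_{\min}>0$, and put $\mu_0=\dfrac{2\alpha+s_{\min}-\sqrt{s_{\min}^2+4\alpha s_{\min}}}{2\alpha}$ (so $\mu_0\in(0,1)$ and $\frac{(1-\mu_0)^2}{\mu_0}=\frac{s_{\min}}{\alpha}$). Let $X_1,\dots,X_m$ be independent random variables with $X_i\sim\operatorname{Ber}(p_i,s_i)$, where $p_i\in(0,1]$ and $0<s_i\le s_{\min}$, and suppose $\sum_{i=1}^m p_is_i\le \mu_0$. Then $B=\sum_{i=1}^m X_i$ satisfies $\mathbb{P}(B>1)\le\alpha$.
   Context: For $p\in[0,1]$ and $s>0$, $\operatorname{Ber}(p,s)$ denotes the scaled Bernoulli distribution: $X\sim\operatorname{Ber}(p,s)$ means $X=s$ with probability $p$ and $X=0$ with probability $1-p$. *)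

theory Defs
  imports "HOL-Probability.Probability"
begin

definition scaled_bernoulli :: "'a measure \<Rightarrow> ('a \<Rightarrow> real) \<Rightarrow> real \<Rightarrow> real \<Rightarrow> bool" where
  "scaled_bernoulli M X p s \<longleftrightarrow>
     X \<in> borel_measurable M \<and>
     measure M {x \<in> space M. X x = s} = p \<and>
     measure M {x \<in> space M. X x = 0} = 1 - p"

end

theory Submission
  imports Defs
begin

lemma alg_bound:
  fixes a s mu :: real
  assumes "a > 0" "s > 0" "0 \<le> mu" "mu \<le> (2*a + s - sqrt (s^2 + 4 * a * s)) / (2*a)"
  shows "mu < 1 \<and> s * mu \<le> a * (1 - mu)^2"
proof -
  define D where "D = sqrt (s^2 + 4 * a * s)"
  have D2: "D^2 = s^2 + 4 * a * s" unfolding D_def using assms by (intro real_sqrt_pow2) (simp add: add_nonneg_nonneg)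
  have Dpos: "D \<ge> 0" unfolding D_def using assms by (simp add: less_imp_le)
  have Ds: "D > s"
  proof (rule ccontr)
    assume "\<not> D > s"
    then have "D^2 \<le> s^2" using Dpos by (intro power_mono) auto
    then show False using D2 assms by (smt (verit) mult_pos_pos)
  qed
  define m0 where "m0 = (2*a+s-D)/(2*a)"
  define m1 where "m1 = (2*a+s+D)/(2*a)"
  have mm0: "mu \<le> m0" using assms unfolding D_def m0_def by simp
  have m0l: "m0 < 1" unfolding m0_def using Ds assms by (simp add: divide_simps)
  have m01: "m0 \<le> m1" unfolding m0_def m1_def using Dpos assms by (simp add: divide_simps)
  have key: "a*(1-mu)^2 - s*mu = a*(mu-m0)*(mu-m1)"
    unfolding m0_def m1_def using assms D2
    by (simp add: field_simps power2_eq_square) algebra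
  have "(mu - m0)*(mu-m1) \<ge> 0" using mm0 m01 by (intro mult_nonpos_nonpos) auto
  then have "a*(mu-m0)*(mu-m1) \<ge> 0" using assms by (simp add: mult.assoc)
  then show ?thesis using key mm0 m0l by simp
qed

theorem mainTheorem1:
  fixes M :: "'a measure" and m :: nat and p s :: "nat \<Rightarrow> real"
    and X :: "nat \<Rightarrow> 'a \<Rightarrow> real" and \<alpha> s_min :: real
  assumes "prob_space M"
    and "\<alpha> > 0" and "s_min > 0"
    and "\<And>i. i < m \<Longrightarrow> 0 < p i \<and> p i \<le> 1"
    and "\<And>i. i < m \<Longrightarrow> 0 < s i \<and> s i \<le> s_min"
    and "\<And>i. i < m \<Longrightarrow> scaled_bernoulli M (X i) (p i) (s i)"
    and "prob_space.indep_vars M (\<lambda>_. borel) X {..<m}"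
    and "(\<Sum>i<m. p i * s i) \<le> (2 * \<alpha> + s_min - sqrt (s_min ^ 2 + 4 * \<alpha> * s_min)) / (2 * \<alpha>)"
  shows "measure M {x \<in> space M. (\<Sum>i<m. X i x) > 1} \<le> \<alpha>"
proof -
  interpret prob_space M by fact
  define mu where "mu = (\<Sum>i<m. p i * s i)"
  have pp: "0 < p i" "p i \<le> 1" if "i < m" for i using assms(4) that by auto
  have ss: "0 < s i" "s i \<le> s_min" if "i < m" for i using assms(5) that by auto
  have mu_nn: "0 \<le> mu" unfolding mu_def
    by (intro sum_nonneg) (simp add: less_imp_le pp ss)
  have mub: "mu < 1 \<and> s_min * mu \<le> \<alpha> * (1 - mu)^2"
    using alg_bound[OF assms(2,3) mu_nn] assms(8) unfolding mu_def by simp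
  have Xm: "X i \<in> borel_measurable M" if "i < m" for i
    using assms(6)[OF that] unfolding scaled_bernoulli_def by simp
  define A where "A i = {x \<in> space M. X i x = s i}" for i
  have Aev: "A i \<in> events" if "i < m" for i
    unfolding A_def using Xm[OF that] by measurable
  have PA: "prob (A i) = p i" if "i < m" for i
    using assms(6)[OF that] unfolding scaled_bernoulli_def A_def by simp
  have AE_X: "AE x in M. X i x = s i \<or> X i x = 0" if "i < m" for i
  proof -
    define C where "C = {x \<in> space M. X i x = 0}"
    have Cev: "C \<in> events" unfolding C_def using Xm[OF that] by measurable
    have PC: "prob C = 1 - p i"
      using assms(6)[OF that] unfolding scaled_bernoulli_def C_def by simp
    have "A i \<inter> C = {}" unfolding A_def C_def using ss[OF that] by auto
    then have "prob (A i \<union> C) = prob (A i) + prob C"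
      using Aev[OF that] Cev by (intro finite_measure_Union) auto
    then have "prob (A i \<union> C) = 1" using PA[OF that] PC by simp
    then have "AE x in M. x \<in> A i \<union> C" by (rule AE_prob_1)
    then show ?thesis unfolding A_def C_def by auto
  qed
  define Y where "Y i v = (if v = s i then s i else 0) - p i * s i" for i v
  define W where "W i x = Y i (X i x)" for i x
  have Ym: "Y i \<in> borel_measurable borel" for i unfolding Y_def by measurable
  have Wm: "W i \<in> borel_measurable M" if "i < m" for i
    unfolding W_def using Ym Xm[OF that] by measurable
  have Wind: "indep_vars (\<lambda>_. borel) W {..<m}"
    unfolding W_def by (rule indep_vars_compose2[OF assms(7)]) (simp add: Ym)
  have Wbound: "\<bar>W i x\<bar> \<le> s i + p i * s i" if "i < m" for i x
    unfolding W_def Y_def using pp[OF that] ss[OF that] by auto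
  have Wind2: "indep_var borel (W i) borel (W j)" if "i < m" "j < m" "i \<noteq> j" for i j
  proof -
    have "indep_var (PiM {i} (\<lambda>_. borel)) (\<lambda>\<omega>. restrict (\<lambda>k. W k \<omega>) {i})
                    (PiM {j} (\<lambda>_. borel)) (\<lambda>\<omega>. restrict (\<lambda>k. W k \<omega>) {j})"
      using that by (intro indep_var_restrict[OF Wind]) auto
    then have "indep_var borel ((\<lambda>f. f i) \<circ> (\<lambda>\<omega>. restrict (\<lambda>k. W k \<omega>) {i}))
                         borel ((\<lambda>f. f j) \<circ> (\<lambda>\<omega>. restrict (\<lambda>k. W k \<omega>) {j}))"
      by (rule indep_var_compose)
         (auto intro: measurable_component_singleton[where M="\<lambda>_. borel", simplified])
    then show ?thesis by (simp add: comp_def)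
  qed
  have Wint: "integrable M (W i)" if "i < m" for i
    by (rule integrable_const_bound[where B="s i + p i * s i"]) (use Wbound[OF that] Wm[OF that] in auto)
  have Wint2: "integrable M (\<lambda>x. W i x * W j x)" if "i < m" "j < m" for i j
    by (rule integrable_const_bound[where B="(s i + p i * s i) * (s j + p j * s j)"])
       (use Wbound[OF that(1)] Wbound[OF that(2)] Wm[OF that(1)] Wm[OF that(2)] in
        \<open>auto simp: abs_mult intro!: AE_I2 mult_mono order_trans[OF abs_ge_zero]\<close>)
  have Wform: "W i x = s i * indicator (A i) x - p i * s i" if "i < m" "x \<in> space M" for i x
    unfolding W_def Y_def A_def using that by (auto simp: indicator_def)
  have Wsq: "W i x * W i x = (p i * s i)^2 + indicator (A i) x * ((s i - p i * s i)^2 - (p i * s i)^2)"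
    if "i < m" "x \<in> space M" for i x
    unfolding W_def Y_def A_def using that by (auto simp: indicator_def power2_eq_square)
  have indint: "integrable M (indicator (A i) :: 'a \<Rightarrow> real)" if "i < m" for i
    using Aev[OF that] by (intro integrable_real_indicator) (auto simp: emeasure_eq_measure)
  have EW: "expectation (W i) = 0" if "i < m" for i
  proof -
    have "expectation (W i) = expectation (\<lambda>x. s i * indicator (A i) x - p i * s i)"
      using Wform[OF that] by (intro Bochner_Integration.integral_cong) auto
    also have "\<dots> = s i * prob (A i) - p i * s i"
      using Aev[OF that] indint[OF that] by (simp add: prob_space)
    finally show ?thesis using PA[OF that] by simp
  qed
  have EW2: "expectation (\<lambda>x. W i x * W i x) \<le> s_min * (p i * s i)" if "i < m" for i
  proof -
    have "expectation (\<lambda>x. W i x * W i x) = expectation (\<lambda>x. (p i * s i)^2 + indicator (A i) x * ((s i - p i * s i)^2 - (p i * s i)^2))"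
      using Wsq[OF that] by (intro Bochner_Integration.integral_cong) auto
    also have "\<dots> = (p i * s i)^2 + prob (A i) * ((s i - p i * s i)^2 - (p i * s i)^2)"
      using Aev[OF that] indint[OF that] by (simp add: prob_space)
    also have "\<dots> = p i * s i * s i * (1 - p i)" using PA[OF that] by (simp add: power2_eq_square algebra_simps)
    also have "\<dots> \<le> s_min * (p i * s i)"
    proof -
      have "p i * s i * s i * (1 - p i) \<le> p i * s i * s i * 1"
        using pp[OF that] ss[OF that] by (intro mult_left_mono) auto
      also have "\<dots> \<le> p i * s i * s_min"
        using pp[OF that] ss[OF that] by (simp add: mult_left_mono)
      finally show ?thesis by (simp add: mult.commute)
    qed
    finally show ?thesis .
  qed
  have EWW: "expectation (\<lambda>x. W i x * W j x) = (if i = j then expectation (\<lambda>x. W i x * W i x) else 0)"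
    if "i < m" "j < m" for i j
  proof (cases "i = j")
    case False
    then show ?thesis using indep_var_lebesgue_integral[OF Wind2[OF that False] Wint[OF that(1)] Wint[OF that(2)]]
      EW[OF that(1)] by simp
  qed simp
  define S where "S x = (\<Sum>i<m. W i x)" for x
  have Sm: "S \<in> borel_measurable M" unfolding S_def
    by (intro borel_measurable_sum) (simp add: Wm)
  have S2: "S x ^ 2 = (\<Sum>i<m. \<Sum>j<m. W i x * W j x)" for x
    unfolding S_def power2_eq_square by (rule sum_product)
  have S2int: "integrable M (\<lambda>x. S x ^ 2)"
    unfolding S2 by (intro Bochner_Integration.integrable_sum) (simp add: Wint2)
  have ES2: "expectation (\<lambda>x. S x ^ 2) \<le> s_min * mu"
  proof -
    have "expectation (\<lambda>x. S x ^ 2) = (\<Sum>i<m. \<Sum>j<m. expectation (\<lambda>x. W i x * W j x))"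
    proof -
      have "expectation (\<lambda>x. S x ^ 2) = (\<Sum>i<m. expectation (\<lambda>x. \<Sum>j<m. W i x * W j x))"
        unfolding S2 by (rule Bochner_Integration.integral_sum)
          (rule Bochner_Integration.integrable_sum, rule Wint2, simp, simp)
      also have "\<dots> = (\<Sum>i<m. \<Sum>j<m. expectation (\<lambda>x. W i x * W j x))"
      proof (rule sum.cong[OF refl])
        fix i assume "i \<in> {..<m}"
        then show "expectation (\<lambda>x. \<Sum>j<m. W i x * W j x) = (\<Sum>j<m. expectation (\<lambda>x. W i x * W j x))"
          by (intro Bochner_Integration.integral_sum Wint2) auto
      qed
      finally show ?thesis .
    qed
    also have "\<dots> = (\<Sum>i<m. expectation (\<lambda>x. W i x * W i x))"
    proof (rule sum.cong[OF refl])
      fix i assume i: "i \<in> {..<m}"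
      have "(\<Sum>j<m. expectation (\<lambda>x. W i x * W j x))
          = (\<Sum>j<m. (if i = j then expectation (\<lambda>x. W i x * W i x) else 0))"
        using i by (intro sum.cong[OF refl] EWW) auto
      also have "\<dots> = expectation (\<lambda>x. W i x * W i x)"
        using i by simp
      finally show "(\<Sum>j<m. expectation (\<lambda>x. W i x * W j x)) = expectation (\<lambda>x. W i x * W i x)" .
    qed
    also have "\<dots> \<le> (\<Sum>i<m. s_min * (p i * s i))"
      by (rule sum_mono, rule EW2) simp
    also have "\<dots> = s_min * mu" unfolding mu_def by (simp add: sum_distrib_left)
    finally show ?thesis .
  qed
  have SX: "S x = (\<Sum>i<m. X i x) - mu" if "\<forall>i\<in>{..<m}. X i x = s i \<or> X i x = 0" for x
  proof -
    have "S x = (\<Sum>i<m. (if X i x = s i then s i else 0) - p i * s i)"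
      unfolding S_def W_def Y_def by simp
    also have "\<dots> = (\<Sum>i<m. X i x - p i * s i)"
      using that by (intro sum.cong refl) auto
    finally show ?thesis unfolding mu_def by (simp add: sum_subtractf)
  qed
  have c_pos: "(1 - mu)^2 > 0" using mub by simp
  have AEall: "AE x in M. \<forall>i\<in>{..<m}. X i x = s i \<or> X i x = 0"
    by (intro AE_finite_allI) (auto intro: AE_X)
  have "measure M {x \<in> space M. (\<Sum>i<m. X i x) > 1} \<le> measure M {x \<in> space M. S x ^ 2 \<ge> (1 - mu)^2}"
  proof (rule finite_measure_mono_AE)
    show "AE x\<in>{x \<in> space M. (\<Sum>i<m. X i x) > 1} in M. x \<in> {x \<in> space M. S x ^ 2 \<ge> (1 - mu)^2}"
      using AEall
    proof eventually_elim
      case (elim x)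
      show ?case
      proof
        assume x: "x \<in> {x \<in> space M. (\<Sum>i<m. X i x) > 1}"
        then have "S x > 1 - mu" using SX[OF elim] by simp
        moreover have "1 - mu > 0" using mub by simp
        ultimately have "(1 - mu)^2 \<le> S x ^ 2" by (intro power_mono) auto
        then show "x \<in> {x \<in> space M. S x ^ 2 \<ge> (1 - mu)^2}" using x by simp
      qed
    qed
    show "{x \<in> space M. S x ^ 2 \<ge> (1 - mu)^2} \<in> events" using Sm by measurable
  qed
  also have "\<dots> \<le> expectation (\<lambda>x. S x ^ 2) / (1 - mu)^2"
    by (rule integral_Markov_inequality_measure[where A="space M"]) (use S2int c_pos in auto)
  also have "\<dots> \<le> s_min * mu / (1 - mu)^2"
    using ES2 c_pos by (simp add: divide_right_mono)
  also have "\<dots> \<le> \<alpha>" using mub c_pos by (simp add: pos_divide_le_eq)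
  finally show ?thesis .
qed

end
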